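(* Let $f(z)=\sum_{k\ge0}a_kz^k$ be an entire function. If $f$ is transcendental then, for all $n\in\mathbb N$, $\kappa(n,r)\to\infty$ as $r\to\infty$. If $f$ is a polynomial of degree $d$, then $\kappa(n,r)\to\infty$ as $r\to\infty$ for all $n\ne d$, but $\kappa(d,r)\to 1$ as $r\to\infty$.
   Context: For $r>0$, $M_1(r)=\frac{1}{2\pi}\int_0^{2\pi}|f(re^{i\theta})|\,d\theta$ and $\kappa(n,r)=\dfrac{M_1(r)}{|a_n|r^n}$, with the convention $\kappa(n,r)=+\infty$ if $a_n=0$. *)

theory Defs
  imports "HOL-Complex_Analysis.Complex_Analysis" "HOL-Library.Extended_Real"
begin

definition taylor_coeff :: "(complex \<Rightarrow> complex) \<Rightarrow> nat \<Rightarrow> complex" where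
  "taylor_coeff f k = (deriv ^^ k) f 0 / of_nat (fact k)"

definition M1 :: "(complex \<Rightarrow> complex) \<Rightarrow> real \<Rightarrow> real" where
  "M1 f r = (1 / (2 * pi)) * integral {0..2*pi} (\<lambda>\<theta>. norm (f (of_real r * exp (\<i> * of_real \<theta>))))"

definition kappa :: "(complex \<Rightarrow> complex) \<Rightarrow> nat \<Rightarrow> real \<Rightarrow> ereal" where
  "kappa f n r = (if taylor_coeff f n = 0 then PInfty
                  else ereal (M1 f r / (norm (taylor_coeff f n) * r ^ n)))"

end

theory Submission
  imports Defs
begin

lemma norm_circ: "norm (exp (2 * complex_of_real pi * \<i> * complex_of_real t)) = 1"
  by (simp add: norm_exp)

lemma cont_h: assumes "f holomorphic_on UNIV"
  shows "continuous_on S (\<lambda>t. norm (f (of_real r * exp (\<i> * of_real (c*t)))))"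
proof -
  have "continuous_on UNIV f" using assms holomorphic_on_imp_continuous_on by blast
  have g: "continuous_on S (\<lambda>t. of_real r * exp (\<i> * of_real (c*t)))"
    by (intro continuous_intros)
  have "continuous_on S (\<lambda>t. f (of_real r * exp (\<i> * of_real (c*t))))"
    by (rule continuous_on_compose2[OF \<open>continuous_on UNIV f\<close> g]) auto
  then show ?thesis by (rule continuous_on_norm)
qed

lemma M1_alt: assumes "f holomorphic_on UNIV"
  shows "M1 f r = integral {0..1} (\<lambda>t. norm (f (of_real r * exp (\<i> * of_real (2*pi*t)))))"
proof -
  have img: "(\<lambda>x. x / (2*pi)) ` {0..2*pi} = {0..1}"
  proof safe
    fix x :: real assume "x \<in> {0..1}"
    then show "x \<in> (\<lambda>x. x / (2*pi)) ` {0..2*pi}"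
      by (intro image_eqI[where x="2*pi*x"]) auto
  qed auto
  show ?thesis
    unfolding M1_def
    using integral_stretch_real[where m="2*pi" and f="\<lambda>\<theta>. norm (f (of_real r * exp (\<i> * of_real \<theta>)))" and a=0 and b="2*pi"]
    by (simp add: img)
qed


lemma cauchy_L1:
  assumes hol: "f holomorphic_on UNIV" and r: "r > 0"
  shows "norm (taylor_coeff f n) * r^n \<le> M1 f r"
proof -
  define h where "h t = norm (f (of_real r * exp (\<i> * of_real (2*pi*t))))" for t
  have ci: "((\<lambda>u. f u / (u-0) ^ (Suc n)) has_contour_integral ((2 * pi * \<i>) / (fact n) * (deriv ^^ n) f 0)) (circlepath 0 r)"
    by (rule Cauchy_has_contour_integral_higher_derivative_circlepath)
       (use hol r in \<open>auto intro: holomorphic_on_imp_continuous_on holomorphic_on_subset\<close>)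
  have tc: "(2 * pi * \<i>) / (fact n) * (deriv ^^ n) f 0 = 2 * pi * \<i> * taylor_coeff f n"
    by (simp add: taylor_coeff_def)
  define g where "g t = f (circlepath 0 r t) / (circlepath 0 r t) ^ Suc n * vector_derivative (circlepath 0 r) (at t within {0..1})" for t
  have I: "(g has_integral (2 * pi * \<i> * taylor_coeff f n)) {0..1}"
    using ci unfolding has_contour_integral_def g_def tc by simp
  have gb: "norm (g t) = 2*pi / r^n * h t" if "t \<in> {0..1}" for t
  proof -
    have e: "exp (2 * complex_of_real pi * \<i> * complex_of_real t) = exp (\<i> * of_real (2*pi*t))"
      by (simp add: algebra_simps)
    have vd: "vector_derivative (circlepath 0 r) (at t within {0..1}) = 2 * pi * \<i> * r * exp(2 * of_real pi * \<i> * t)"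
      using that by (simp add: vector_derivative_circlepath01)
    have "norm (g t) = norm (f (circlepath 0 r t)) / r ^ Suc n * (2*pi*r)"
      unfolding g_def vd using r by (simp add: circlepath norm_mult norm_divide norm_power norm_exp)
    then show ?thesis using r by (simp add: h_def circlepath e field_simps)
  qed
  have hint: "h integrable_on {0..1}"
    unfolding h_def by (rule integrable_continuous_interval) (rule cont_h[OF hol])
  have "norm (integral {0..1} g) \<le> integral {0..1} (\<lambda>t. 2*pi / r^n * h t)"
  proof (rule integral_norm_bound_integral)
    show "g integrable_on {0..1}" using I by blast
    show "(\<lambda>t. 2*pi / r^n * h t) integrable_on {0..1}" using integrable_on_cmult_right[OF hint, of "2*pi / r^n"] by (simp add: mult.commute)
  qed (use gb in auto)
  also have "\<dots> = 2*pi / r^n * M1 f r"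
    by (simp add: M1_alt[OF hol] h_def)
  finally have "2*pi * norm (taylor_coeff f n) \<le> 2*pi / r^n * M1 f r"
    using integral_unique[OF I] by (simp add: norm_mult)
  then show ?thesis using r by (simp add: field_simps)
qed


lemma poly_rep:
  assumes hol: "f holomorphic_on UNIV" and z: "\<forall>k>d. taylor_coeff f k = 0"
  shows "f w = (\<Sum>k\<le>d. taylor_coeff f k * w^k)"
proof -
  have "(\<lambda>k. (deriv ^^ k) f 0 / (fact k) * (w-0)^k) sums f w"
    by (rule holomorphic_power_series[where r="norm w + 1"]) (use hol in \<open>auto intro: holomorphic_on_subset\<close>)
  then have s1: "(\<lambda>k. taylor_coeff f k * w^k) sums f w"
    by (simp add: taylor_coeff_def)
  have s2: "(\<lambda>k. taylor_coeff f k * w^k) sums (\<Sum>k\<in>{..d}. taylor_coeff f k * w^k)"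
    by (rule sums_finite) (use z in auto)
  show ?thesis using sums_unique2[OF s1 s2] by simp
qed

lemma M1_upper:
  assumes hol: "f holomorphic_on UNIV" and z: "\<forall>k>d. taylor_coeff f k = 0" and r: "r \<ge> 0"
  shows "M1 f r \<le> (\<Sum>k\<le>d. norm (taylor_coeff f k) * r^k)"
proof -
  define h where "h t = norm (f (of_real r * exp (\<i> * of_real (2*pi*t))))" for t
  have hint: "h integrable_on {0..1}"
    unfolding h_def by (rule integrable_continuous_interval) (rule cont_h[OF hol])
  have hb: "h t \<le> (\<Sum>k\<le>d. norm (taylor_coeff f k) * r^k)" for t
  proof -
    have nw: "norm (of_real r * exp (\<i> * of_real (2*pi*t))) = r"
      using r by (simp add: norm_mult norm_exp)
    have "h t = norm (\<Sum>k\<le>d. taylor_coeff f k * (of_real r * exp (\<i> * of_real (2*pi*t)))^k)"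
      unfolding h_def by (subst poly_rep[OF hol z]) rule
    also have "\<dots> \<le> (\<Sum>k\<le>d. norm (taylor_coeff f k * (of_real r * exp (\<i> * of_real (2*pi*t)))^k))"
      by (rule norm_sum)
    also have "\<dots> = (\<Sum>k\<le>d. norm (taylor_coeff f k) * r^k)"
      by (simp only: norm_mult[of "taylor_coeff f _"] norm_power nw)
    finally show ?thesis .
  qed
  have "integral {0..1} h \<le> integral {0..1} (\<lambda>_::real. (\<Sum>k\<le>d. norm (taylor_coeff f k) * r^k))"
    by (rule Henstock_Kurzweil_Integration.integral_le[OF hint]) (use hb in auto)
  moreover have "M1 f r = integral {0..1} h" unfolding h_def by (rule M1_alt[OF hol])
  ultimately show ?thesis by simp
qed


lemma kappa_inf:
  assumes hol: "f holomorphic_on UNIV" and mn: "m > n" and am: "taylor_coeff f m \<noteq> 0"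
  shows "((\<lambda>r. kappa f n r) \<longlongrightarrow> PInfty) at_top"
proof (cases "taylor_coeff f n = 0")
  case True
  then show ?thesis by (simp add: kappa_def)
next
  case False
  define c where "c = norm (taylor_coeff f m) / norm (taylor_coeff f n)"
  have c: "c > 0" using False am by (simp add: c_def)
  have "((\<lambda>r. kappa f n r) \<longlongrightarrow> \<infinity>) at_top" unfolding tendsto_PInfty
  proof
    fix B :: real
    show "eventually (\<lambda>r. ereal B < kappa f n r) at_top"
      unfolding eventually_at_top_linorder
    proof (intro exI allI impI)
      fix r assume r: "r \<ge> max 1 (\<bar>B\<bar>/c + 1)"
      then have r1: "r \<ge> 1" and r2: "r \<ge> \<bar>B\<bar>/c + 1" by auto
      have rn: "r^n > 0" using r1 by simp
      have an: "norm (taylor_coeff f n) > 0" using False by simp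
      have "norm (taylor_coeff f m) * r^m \<le> M1 f r" using cauchy_L1[OF hol, of r m] r1 by simp
      then have "norm (taylor_coeff f m) * r^m / (norm (taylor_coeff f n) * r^n) \<le> M1 f r / (norm (taylor_coeff f n) * r^n)"
        using rn an by (intro divide_right_mono) auto
      moreover have "norm (taylor_coeff f m) * r^m / (norm (taylor_coeff f n) * r^n) = c * r^(m-n)"
      proof -
        have "r^m = r^n * r^(m-n)" using mn by (simp flip: power_add)
        then show ?thesis using rn an mn by (simp add: c_def field_simps)
      qed
      moreover have "r \<le> r^(m-n)"
        using power_increasing[of 1 "m-n" r] mn r1 by simp
      moreover have "c * r > B"
      proof -
        have "c * r \<ge> c * (\<bar>B\<bar>/c + 1)" using c r2 by (intro mult_left_mono) auto
        also have "c * (\<bar>B\<bar>/c + 1) = \<bar>B\<bar> + c" using c by (simp add: field_simps)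
        finally show ?thesis using c by linarith
      qed
      ultimately have "B < M1 f r / (norm (taylor_coeff f n) * r^n)"
        using c by (smt (verit, ccfv_SIG) mult_left_mono)
      then show "ereal B < kappa f n r" using False by (simp add: kappa_def)
    qed
  qed
  then show ?thesis unfolding infinity_ereal_def .
qed

lemma inv_pow_0: "0 < j \<Longrightarrow> ((\<lambda>r::real. inverse (r ^ j)) \<longlongrightarrow> 0) at_top"
  by (intro tendsto_inverse_0_at_top filterlim_pow_at_top filterlim_ident)

lemma kappa_one:
  assumes hol: "f holomorphic_on UNIV" and ad: "taylor_coeff f d \<noteq> 0" and z: "\<forall>k>d. taylor_coeff f k = 0"
  shows "((\<lambda>r. kappa f d r) \<longlongrightarrow> 1) at_top"
proof -
  define A where "A = norm (taylor_coeff f d)"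
  have A: "A > 0" using ad by (simp add: A_def)
  define U where "U r = 1 + (\<Sum>k<d. norm (taylor_coeff f k) / A * inverse (r ^ (d-k)))" for r :: real
  have U: "(U \<longlongrightarrow> 1) at_top"
  proof -
    have "(U \<longlongrightarrow> 1 + 0) at_top" unfolding U_def
      by (intro tendsto_add tendsto_const tendsto_null_sum tendsto_mult_right_zero inv_pow_0) auto
    then show ?thesis by simp
  qed
  have low: "eventually (\<lambda>r. 1 \<le> M1 f r / (A * r^d)) at_top"
    using eventually_gt_at_top[of 0]
  proof eventually_elim
    case (elim r)
    then show ?case using cauchy_L1[OF hol elim, of d] A by (simp add: A_def field_simps)
  qed
  have up: "eventually (\<lambda>r. M1 f r / (A * r^d) \<le> U r) at_top"
    using eventually_gt_at_top[of 0]
  proof eventually_elim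
    case (elim r)
    have pos: "A * r^d > 0" using A elim by simp
    have "M1 f r / (A * r^d) \<le> (\<Sum>k\<le>d. norm (taylor_coeff f k) * r^k) / (A * r^d)"
      using M1_upper[OF hol z, of r] elim pos by (intro divide_right_mono) auto
    also have "(\<Sum>k\<le>d. norm (taylor_coeff f k) * r^k) = A * r^d + (\<Sum>k<d. norm (taylor_coeff f k) * r^k)"
      by (simp add: lessThan_Suc_atMost[symmetric] A_def)
    also have "(A * r^d + (\<Sum>k<d. norm (taylor_coeff f k) * r^k)) / (A * r^d)
        = 1 + (\<Sum>k<d. norm (taylor_coeff f k) * r^k / (A * r^d))"
      using pos A elim by (simp add: add_divide_distrib sum_divide_distrib)
    also have "(\<Sum>k<d. norm (taylor_coeff f k) * r^k / (A * r^d)) = (\<Sum>k<d. norm (taylor_coeff f k) / A * inverse (r ^ (d-k)))"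
    proof (rule sum.cong)
      fix k assume "k \<in> {..<d}"
      then have "r^d = r^k * r^(d-k)" by (simp flip: power_add)
      then show "norm (taylor_coeff f k) * r^k / (A * r^d) = norm (taylor_coeff f k) / A * inverse (r ^ (d-k))"
        using elim A by (simp add: field_simps)
    qed simp
    finally show ?case by (simp add: U_def)
  qed
  have "((\<lambda>r. M1 f r / (A * r^d)) \<longlongrightarrow> 1) at_top"
    by (rule tendsto_sandwich[OF low up tendsto_const U])
  then have "((\<lambda>r. ereal (M1 f r / (A * r^d))) \<longlongrightarrow> ereal 1) at_top"
    by (rule tendsto_ereal)
  then show ?thesis using ad by (simp add: kappa_def A_def one_ereal_def)
qed

theorem theorem4p4:
  fixes f :: "complex \<Rightarrow> complex"
  assumes entire: "f holomorphic_on UNIV"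
  shows "((\<not> (\<exists>N. \<forall>k>N. taylor_coeff f k = 0)) \<longrightarrow>
            (\<forall>n. ((\<lambda>r. kappa f n r) \<longlongrightarrow> PInfty) at_top))
       \<and> (\<forall>d. (taylor_coeff f d \<noteq> 0 \<and> (\<forall>k>d. taylor_coeff f k = 0)) \<longrightarrow>
            (\<forall>n. n \<noteq> d \<longrightarrow> ((\<lambda>r. kappa f n r) \<longlongrightarrow> PInfty) at_top)
            \<and> ((\<lambda>r. kappa f d r) \<longlongrightarrow> 1) at_top)"
proof (intro conjI impI allI)
  fix n assume "\<not> (\<exists>N. \<forall>k>N. taylor_coeff f k = 0)"
  then obtain m where "m > n" "taylor_coeff f m \<noteq> 0" by blast
  then show "((\<lambda>r. kappa f n r) \<longlongrightarrow> PInfty) at_top" by (rule kappa_inf[OF entire])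
next
  fix d n assume h: "taylor_coeff f d \<noteq> 0 \<and> (\<forall>k>d. taylor_coeff f k = 0)" and nd: "n \<noteq> d"
  show "((\<lambda>r. kappa f n r) \<longlongrightarrow> PInfty) at_top"
  proof (cases "n < d")
    case True
    then show ?thesis using kappa_inf[OF entire True] h by blast
  next
    case False
    then have "taylor_coeff f n = 0" using h nd by auto
    then show ?thesis by (simp add: kappa_def)
  qed
next
  fix d assume h: "taylor_coeff f d \<noteq> 0 \<and> (\<forall>k>d. taylor_coeff f k = 0)"
  then show "((\<lambda>r. kappa f d r) \<longlongrightarrow> 1) at_top" using kappa_one[OF entire] by blast
qed

end
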